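(* Let $D$ be a delta-matroid on $[n,\overline{n}]$ and write $U_D(u,0)=a_n+a_{n-1}u+\dots+a_0u^n$. Then $(a_0,\dots,a_n)$ is the $f$-vector of a pure simplicial complex. In particular, $a_i\le a_{n-i}$ for all $i\le n/2$, and $a_0\le a_1\le\dots\le a_{\lfloor (n+1)/2\rfloor}$.
   Context: Let $[n,\overline{n}]=\{1,\dots,n,\overline{1},\dots,\overline{n}\}$ with involution $a\mapsto\overline{a}$; $\overline{S}=\{\overline{a}:a\in S\}$. A subset is admissible if it contains at most one of $i,\overline{i}$ for each $i$; $\operatorname{AdS}_n$ is the set of admissible subsets. In $\mathbb{R}^n$ set $e_{\overline{i}}=-e_i$, $e_S=\sum_{a\in S}e_a$. A delta-matroid $D$ on $[n,\overline{n}]$ is a nonempty collection $\mathcal{F}$ of admissible sets of size $n$ (feasible sets) such that $\operatorname{Conv}\{e_B:B\in\mathcal{F}\}$ has all edges parallel to some $e_i$ or $e_i\pm e_j$. Rank function: $g_D(S)=\max_{B\in\mathcal{F}}(|S\cap B|-|\overline{S}\cap B|)$. $U_D(u,v)=\sum_{S\in\operatorname{AdS}_n}u^{n-|S|}v^{(|S|-g_D(S))/2}$. The $f$-vector of a simplicial complex of dimension $n-1$ is $(f_{-1},f_0,\dots,f_{n-1})$, $f_i$ the number of $i$-dimensional faces (faces with $i+1$ vertices); a simplicial complex is pure if all its facets have the same dimension. *)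

theory Defs
  imports "HOL-Analysis.Analysis"
begin

text \<open>Ground set [n, nbar] is rendered as the type ('n \<times> bool) with n = CARD('n):
  (i, True) stands for i and (i, False) stands for its bar.\<close>

definition bar :: "('n \<times> bool) \<Rightarrow> ('n \<times> bool)" where
  "bar x = (fst x, \<not> snd x)"

definition admissible :: "('n \<times> bool) set \<Rightarrow> bool" where
  "admissible S \<longleftrightarrow> (\<forall>i. \<not> ((i, True) \<in> S \<and> (i, False) \<in> S))"

definition elt_vec :: "('n::finite \<times> bool) \<Rightarrow> real^'n" where
  "elt_vec x = (if snd x then axis (fst x) 1 else - axis (fst x) 1)"

definition set_vec :: "('n::finite \<times> bool) set \<Rightarrow> real^'n" where
  "set_vec S = (\<Sum>x\<in>S. elt_vec x)"

definition edge_dirs :: "(real^'n::finite) set" where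
  "edge_dirs = {axis i 1 | i. True} \<union> {axis i 1 + axis j 1 | i j. i \<noteq> j}
               \<union> {axis i 1 - axis j 1 | i j. i \<noteq> j}"

definition is_edge :: "(real^'n::finite) set \<Rightarrow> (real^'n) set \<Rightarrow> bool" where
  "is_edge E P \<longleftrightarrow> E face_of P \<and> aff_dim E = 1"

definition delta_matroid :: "('n::finite \<times> bool) set set \<Rightarrow> bool" where
  "delta_matroid \<F> \<longleftrightarrow> \<F> \<noteq> {} \<and>
     (\<forall>B\<in>\<F>. admissible B \<and> card B = CARD('n)) \<and>
     (\<forall>E. is_edge E (convex hull (set_vec ` \<F>)) \<longrightarrow>
        (\<exists>v\<in>edge_dirs. \<forall>x\<in>E. \<forall>y\<in>E. \<exists>c. x - y = c *\<^sub>R v))"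

definition dm_rank :: "('n::finite \<times> bool) set set \<Rightarrow> ('n \<times> bool) set \<Rightarrow> int" where
  "dm_rank \<F> S = Max ((\<lambda>B. int (card (S \<inter> B)) - int (card (bar ` S \<inter> B))) ` \<F>)"

text \<open>U_D(u,v); the exponent (|S| - g_D(S))/2 is an integer (it is always even),
  rendered with integer division.\<close>
definition U_D :: "('n::finite \<times> bool) set set \<Rightarrow> real \<Rightarrow> real \<Rightarrow> real" where
  "U_D \<F> u v = (\<Sum>S\<in>{S. admissible S}.
      u ^ (CARD('n) - card S) * v ^ nat ((int (card S) - dm_rank \<F> S) div 2))"

definition simplicial_complex :: "'a set set \<Rightarrow> bool" where
  "simplicial_complex K \<longleftrightarrow> finite K \<and> {} \<in> K \<and> (\<forall>F\<in>K. finite F) \<and>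
     (\<forall>F\<in>K. \<forall>G. G \<subseteq> F \<longrightarrow> G \<in> K)"

definition facet :: "'a set set \<Rightarrow> 'a set \<Rightarrow> bool" where
  "facet K F \<longleftrightarrow> F \<in> K \<and> \<not> (\<exists>G\<in>K. F \<subset> G)"

definition pure_complex :: "'a set set \<Rightarrow> bool" where
  "pure_complex K \<longleftrightarrow> (\<forall>F G. facet K F \<and> facet K G \<longrightarrow> card F = card G)"

text \<open>num_faces K k = number of faces with k vertices = f_(k-1).\<close>
definition num_faces :: "'a set set \<Rightarrow> nat \<Rightarrow> nat" where
  "num_faces K k = card {F\<in>K. card F = k}"

end

theory Submission
  imports Defs
begin

lemma hibi_ineq:
  fixes Fam :: "'a set set"
  assumes fin: "finite Fam" and down: "\<forall>S\<in>Fam. \<forall>T. T \<subseteq> S \<longrightarrow> T \<in> Fam"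
    and ext: "\<forall>S\<in>Fam. \<exists>B\<in>Fam. S \<subseteq> B \<and> card B = n \<and> finite B"
    and ij: "i \<le> j" "i + j \<le> n"
  shows "card {S\<in>Fam. card S = i} \<le> card {S\<in>Fam. card S = j}"
proof -
  define Si where "Si = {S\<in>Fam. card S = i}"
  define Sj where "Sj = {S\<in>Fam. card S = j}"
  have finS: "finite Si" "finite Sj" using fin by (auto simp: Si_def Sj_def)
  have finel: "finite S" if "S \<in> Fam" for S
    using ext that by (meson finite_subset)
  have 1: "(\<Sum>A\<in>Si. card {C\<in>Sj. A \<subseteq> C}) = (j choose i) * card Sj"
  proof (rule sum_multicount[OF finS(1) finS(2)], intro ballI)
    fix C assume C: "C \<in> Sj"
    have "{A\<in>Si. A \<subseteq> C} = {A. A \<subseteq> C \<and> card A = i}"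
      using C down by (auto simp: Si_def Sj_def)
    also have "card \<dots> = card C choose i" using C finel by (intro n_subsets) (auto simp: Sj_def)
    finally show "card {A\<in>Si. A \<subseteq> C} = j choose i" using C by (simp add: Sj_def)
  qed
  have 2: "((n - i) choose (j - i)) \<le> card {C\<in>Sj. A \<subseteq> C}" if A: "A \<in> Si" for A
  proof -
    obtain B where B: "B \<in> Fam" "A \<subseteq> B" "card B = n" "finite B" using ext A by (auto simp: Si_def)
    have cA: "card A = i" "finite A" using A finel by (auto simp: Si_def)
    have cBA: "card (B - A) = n - i" using B cA by (simp add: card_Diff_subset)
    have "(n - i) choose (j - i) = card {D. D \<subseteq> B - A \<and> card D = j - i}"
      using n_subsets[of "B - A" "j - i"] B cBA by simp
    also have "\<dots> \<le> card {C\<in>Sj. A \<subseteq> C}"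
    proof (rule card_inj_on_le[where f = "\<lambda>D. A \<union> D"])
      show "inj_on (\<lambda>D. A \<union> D) {D. D \<subseteq> B - A \<and> card D = j - i}"
        by (rule inj_onI) blast
      show "finite {C\<in>Sj. A \<subseteq> C}" using finS by simp
      show "(\<lambda>D. A \<union> D) ` {D. D \<subseteq> B - A \<and> card D = j - i} \<subseteq> {C\<in>Sj. A \<subseteq> C}"
      proof safe
        fix D assume D: "D \<subseteq> B - A" "card D = j - i"
        have fD: "finite D" using D B finite_subset by blast
        have "card (A \<union> D) = card A + card D" using D cA fD by (intro card_Un_disjoint) auto
        hence "card (A \<union> D) = j" using D cA ij by simp
        moreover have "A \<union> D \<in> Fam" using down B D by blast
        ultimately show "A \<union> D \<in> Sj" by (simp add: Sj_def)
      qed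
    qed
    finally show ?thesis .
  qed
  have "card Si * ((n - i) choose (j - i)) \<le> (\<Sum>A\<in>Si. card {C\<in>Sj. A \<subseteq> C})"
    using sum_mono[of Si "\<lambda>_. (n - i) choose (j - i)", OF 2] by (simp add: mult.commute)
  also have "\<dots> = (j choose i) * card Sj" by (rule 1)
  also have "j choose i = j choose (j - i)" using ij(1) by (rule binomial_symmetric)
  also have "\<dots> \<le> (n - i) choose (j - i)" using ij by (intro binomial_right_mono) simp
  finally have "card Si * ((n - i) choose (j - i)) \<le> ((n - i) choose (j - i)) * card Sj"
    by (simp add: mult_right_mono)
  moreover have "(n - i) choose (j - i) > 0" using ij by (intro zero_less_binomial) simp
  ultimately show ?thesis unfolding Si_def Sj_def by (simp add: mult.commute)
qed

lemma full_has:
  fixes B :: "('n::finite \<times> bool) set"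
  assumes "admissible B" "card B = CARD('n)"
  shows "(i, True) \<in> B \<or> (i, False) \<in> B"
proof -
  have "inj_on fst B"
  proof (rule inj_onI)
    fix x y assume "x \<in> B" "y \<in> B" "fst x = fst y"
    thus "x = y" using assms(1) unfolding admissible_def
      by (metis (full_types) prod.collapse)
  qed
  hence "card (fst ` B) = CARD('n)" using assms(2) by (simp add: card_image)
  hence "fst ` B = UNIV" by (simp add: card_eq_UNIV_imp_eq_UNIV)
  then obtain x where "x \<in> B" "fst x = i" by (metis UNIV_I imageE)
  thus ?thesis by (metis (full_types) prod.collapse)
qed

lemma bar_in:
  fixes B :: "('n::finite \<times> bool) set"
  assumes "admissible B" "card B = CARD('n)" "x \<notin> B"
  shows "bar x \<in> B"
  using full_has[OF assms(1,2), of "fst x"] assms(3) unfolding bar_def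
  by (cases x; cases "snd x") auto

lemma bar_notin:
  fixes B :: "('n::finite \<times> bool) set"
  assumes "admissible B" "x \<in> B"
  shows "bar x \<notin> B"
  using assms unfolding bar_def admissible_def
  by (cases x; cases "snd x") auto


lemma rank_in:
  fixes F :: "('n::finite \<times> bool) set set"
  assumes dm: "delta_matroid F" and S: "\<exists>B\<in>F. S \<subseteq> B"
  shows "dm_rank F S = int (card S)"
proof -
  have finF: "finite F" by simp
  obtain B where B: "B \<in> F" "S \<subseteq> B" using S by blast
  have adm: "admissible B" using dm B unfolding delta_matroid_def by auto
  have "bar ` S \<inter> B = {}" using bar_notin[OF adm] B(2) by blast
  hence v: "int (card (S \<inter> B)) - int (card (bar ` S \<inter> B)) = int (card S)"
    using B(2) by (simp add: Int_absorb2)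
  have le: "\<forall>B'\<in>F. int (card (S \<inter> B')) - int (card (bar ` S \<inter> B')) \<le> int (card S)"
  proof
    fix B' assume "B' \<in> F"
    have "card (S \<inter> B') \<le> card S" by (rule card_mono) auto
    thus "int (card (S \<inter> B')) - int (card (bar ` S \<inter> B')) \<le> int (card S)" by linarith
  qed
  show ?thesis unfolding dm_rank_def
    apply (rule antisym)
    using le B(1) apply (subst Max_le_iff) apply auto[3]
    using B(1) v by (intro Max_ge) (auto intro!: rev_image_eqI[of B])
qed

lemma rank_out:
  fixes F :: "('n::finite \<times> bool) set set"
  assumes dm: "delta_matroid F" and S: "\<not> (\<exists>B\<in>F. S \<subseteq> B)"
  shows "dm_rank F S \<le> int (card S) - 2"
proof -
  have ne: "F \<noteq> {}" using dm unfolding delta_matroid_def by auto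
  have "int (card (S \<inter> B)) - int (card (bar ` S \<inter> B)) \<le> int (card S) - 2" if B: "B \<in> F" for B
  proof -
    have adm: "admissible B" "card B = CARD('n)" using dm B unfolding delta_matroid_def by auto
    obtain x where x: "x \<in> S" "x \<notin> B" using S B by blast
    have "bar x \<in> bar ` S \<inter> B" using bar_in[OF adm x(2)] x(1) by blast
    hence "card (bar ` S \<inter> B) \<ge> 1"
      by (metis One_nat_def Suc_leI card_gt_0_iff emptyE finite)
    moreover have "card (S \<inter> B) < card S"
      using x by (intro psubset_card_mono) auto
    ultimately show ?thesis by linarith
  qed
  thus ?thesis unfolding dm_rank_def using ne by (subst Max_le_iff) auto
qed

theorem corollary3p5:
  fixes \<F> :: "('n::finite \<times> bool) set set" and a :: "nat \<Rightarrow> real"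
  assumes "delta_matroid \<F>"
    and "\<forall>u. U_D \<F> u 0 = (\<Sum>i\<le>CARD('n). a i * u ^ (CARD('n) - i))"
  shows "(\<exists>K :: nat set set. simplicial_complex K \<and> pure_complex K \<and>
            (\<forall>F\<in>K. card F \<le> CARD('n)) \<and>
            (\<forall>i\<le>CARD('n). real (num_faces K i) = a i))
         \<and> (\<forall>i. 2 * i \<le> CARD('n) \<longrightarrow> a i \<le> a (CARD('n) - i))
         \<and> (\<forall>i j. i \<le> j \<and> j \<le> (CARD('n) + 1) div 2 \<longrightarrow> a i \<le> a j)"
proof -
  define n where "n = CARD('n)"
  define Fam where "Fam = {S. \<exists>B\<in>\<F>. S \<subseteq> B}"
  define c where "c k = card {S\<in>Fam. card S = k}" for k
  have dmF: "\<forall>B\<in>\<F>. admissible B \<and> card B = n" "\<F> \<noteq> {}"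
    using assms(1) unfolding delta_matroid_def n_def by auto
  have finFam: "finite Fam" by simp
  have FamAdm: "Fam \<subseteq> {S. admissible S}"
    using dmF unfolding Fam_def admissible_def by blast
  have cardFam: "card S \<le> n" if SF: "S \<in> Fam" for S
  proof -
    obtain B where B: "B \<in> \<F>" "S \<subseteq> B" using SF unfolding Fam_def by blast
    have "card S \<le> card B" using B(2) by (rule card_mono[OF finite])
    thus ?thesis using dmF(1) B(1) by simp
  qed
  have U: "U_D \<F> u 0 = (\<Sum>i\<le>n. real (c i) * u ^ (n - i))" for u
  proof -
    have "U_D \<F> u 0 = (\<Sum>S\<in>{S. admissible S}. if S \<in> Fam then u ^ (n - card S) else 0)"
      unfolding U_D_def n_def[symmetric]
    proof (rule sum.cong[OF refl])
      fix S :: "('n \<times> bool) set"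
      show "u ^ (n - card S) * 0 ^ nat ((int (card S) - dm_rank \<F> S) div 2) =
            (if S \<in> Fam then u ^ (n - card S) else 0)"
      proof (cases "S \<in> Fam")
        case True
        then show ?thesis using rank_in[OF assms(1), of S] by (simp add: Fam_def)
      next
        case False
        hence "dm_rank \<F> S \<le> int (card S) - 2" using rank_out[OF assms(1), of S] by (simp add: Fam_def)
        hence "nat ((int (card S) - dm_rank \<F> S) div 2) \<noteq> 0" by linarith
        then show ?thesis using False by simp
      qed
    qed
    also have "\<dots> = (\<Sum>S\<in>Fam. u ^ (n - card S))"
    proof -
      have e: "{S. admissible S \<and> S \<in> Fam} = Fam" using FamAdm by blast
      show ?thesis by (simp add: sum.inter_filter[symmetric] e)
    qed
    also have "\<dots> = (\<Sum>i\<le>n. (\<Sum>S\<in>{S\<in>Fam. card S = i}. u ^ (n - card S)))"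
      using cardFam by (intro sum.group[symmetric]) auto
    also have "\<dots> = (\<Sum>i\<le>n. real (c i) * u ^ (n - i))"
      unfolding c_def by (intro sum.cong refl) simp
    finally show ?thesis .
  qed
  have ac: "a i = real (c i)" if "i \<le> n" for i
  proof -
    define b where "b k = a (n - k) - real (c (n - k))" for k
    have "(\<Sum>k\<le>n. b k * u ^ k) = 0" for u
    proof -
      have "(\<Sum>k\<le>n. b k * u ^ k) = (\<Sum>i\<le>n. (a i - real (c i)) * u ^ (n - i))"
        unfolding b_def by (rule sum.reindex_bij_witness[of _ "\<lambda>i. n - i" "\<lambda>i. n - i"]) auto
      also have "\<dots> = 0" using assms(2) U[of u]
        by (simp add: left_diff_distrib sum_subtractf n_def)
      finally show ?thesis .
    qed
    hence "\<forall>k\<le>n. b k = 0" using polyfun_eq_0[where c=b and n=n] by blast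
    hence "b (n - i) = 0" by simp
    thus ?thesis using that by (simp add: b_def)
  qed
  have down: "\<forall>S\<in>Fam. \<forall>T. T \<subseteq> S \<longrightarrow> T \<in> Fam" unfolding Fam_def by blast
  have ext: "\<forall>S\<in>Fam. \<exists>B\<in>Fam. S \<subseteq> B \<and> card B = n \<and> finite B"
    using dmF(1) finite unfolding Fam_def by blast
  have cij: "c i \<le> c j" if "i \<le> j" "i + j \<le> n" for i j
    unfolding c_def by (rule hibi_ineq[OF finFam down ext that])
  obtain f :: "'n \<times> bool \<Rightarrow> nat" and m where f: "f ` UNIV = {..<m}" "inj_on f UNIV"
    using finite_imp_inj_to_nat_seg[of "UNIV :: ('n \<times> bool) set"] by auto
  define K where "K = (image f) ` Fam"
  have injK: "inj_on (image f) Fam" using f(2) by (auto intro!: inj_onI simp: inj_image_eq_iff)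
  have cardf: "card (f ` S) = card S" for S using f(2) by (simp add: card_image inj_on_subset)
  have numK: "num_faces K i = c i" for i
  proof -
    have "{F\<in>K. card F = i} = (image f) ` {S\<in>Fam. card S = i}"
      unfolding K_def using cardf by auto
    thus ?thesis unfolding num_faces_def c_def
      using injK by (simp add: card_image inj_on_subset)
  qed
  have sc: "simplicial_complex K"
    unfolding simplicial_complex_def
  proof (intro conjI ballI allI impI)
    show "finite K" unfolding K_def by simp
    show "{} \<in> K" unfolding K_def Fam_def using dmF(2) by blast
    fix X assume X: "X \<in> K"
    then show "finite X" unfolding K_def by auto
    fix G assume G: "G \<subseteq> X"
    from X obtain S where S: "S \<in> Fam" "X = f ` S" unfolding K_def by auto
    have "G = f ` (S \<inter> f -` G)" using G S(2) by auto
    moreover have "S \<inter> f -` G \<in> Fam" using down S(1) by blast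
    ultimately show "G \<in> K" unfolding K_def by blast
  qed
  have facetn: "card X = n" if "facet K X" for X
  proof -
    from that obtain S where S: "S \<in> Fam" "X = f ` S" unfolding facet_def K_def by auto
    then obtain B where B: "B \<in> \<F>" "S \<subseteq> B" unfolding Fam_def by auto
    have "f ` B \<in> K" unfolding K_def Fam_def using B by blast
    moreover have "f ` S \<subseteq> f ` B" using B by blast
    ultimately have "f ` S = f ` B" using that S unfolding facet_def by blast
    thus ?thesis using S cardf dmF(1) B by metis
  qed
  have part1: "\<exists>K :: nat set set. simplicial_complex K \<and> pure_complex K \<and>
            (\<forall>F\<in>K. card F \<le> CARD('n)) \<and>
            (\<forall>i\<le>CARD('n). real (num_faces K i) = a i)"
  proof (intro exI[of _ K] conjI)
    show "simplicial_complex K" by (rule sc)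
    show "pure_complex K" unfolding pure_complex_def using facetn by simp
    show "\<forall>F\<in>K. card F \<le> CARD('n)" unfolding K_def using cardFam cardf n_def by auto
    show "\<forall>i\<le>CARD('n). real (num_faces K i) = a i" using numK ac n_def by simp
  qed
  have part2: "\<forall>i. 2 * i \<le> CARD('n) \<longrightarrow> a i \<le> a (CARD('n) - i)"
  proof (intro allI impI)
    fix i assume "2 * i \<le> CARD('n)"
    hence "i \<le> n - i" "i + (n - i) \<le> n" "i \<le> n" "n - i \<le> n" unfolding n_def by auto
    thus "a i \<le> a (CARD('n) - i)" using cij ac unfolding n_def[symmetric] by simp
  qed
  have part3: "\<forall>i j. i \<le> j \<and> j \<le> (CARD('n) + 1) div 2 \<longrightarrow> a i \<le> a j"
  proof (intro allI impI)
    fix i j assume h: "i \<le> j \<and> j \<le> (CARD('n) + 1) div 2"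
    show "a i \<le> a j"
    proof (cases "i = j")
      case False
      hence "i + j \<le> n" "i \<le> j" "j \<le> n" using h unfolding n_def by auto
      thus ?thesis using cij ac by simp
    qed simp
  qed
  show ?thesis using part1 part2 part3 by blast
qed

end
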